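(* For every $\alpha\ge0$ and $\beta\ge1$, the Sharma-Mittal entropy $S_{\alpha,\beta}$ is subadditive on the majorization lattice: for all $\mathbf{p},\mathbf{q}\in\mathcal{P}_n$, $$S_{\alpha,\beta}(\mathbf{p}\wedge\mathbf{q})\le S_{\alpha,\beta}(\mathbf{p})+S_{\alpha,\beta}(\mathbf{q}).$$
   Context: $\mathcal{P}_n=\{\mathbf{p}=(p_1,\dots,p_n): p_i\ge0,\ \sum_i p_i=1\}$, with all vectors taken with components in non-increasing order. Majorization: $\mathbf{p}\preceq\mathbf{q}$ iff $\sum_{i=1}^k p_i\le\sum_{i=1}^k q_i$ for all $k$. The greatest lower bound in the lattice $(\mathcal{P}_n,\preceq)$ is $\mathbf{p}\wedge\mathbf{q}=\mathbf{r}$ with $\sum_{i=1}^k r_i=\min\{\sum_{i=1}^k p_i,\sum_{i=1}^k q_i\}$ for $k=1,\dots,n$. The Sharma-Mittal entropy is $S_{\alpha,\beta}(\mathbf{p})=\frac{1}{1-\beta}\left[\left(\sum_{i=1}^n p_i^\alpha\right)^{\frac{1-\beta}{1-\alpha}}-1\right]$, with values at $\alpha=1$ and/or $\beta=1$ defined by the corresponding limits. *)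

theory Defs
  imports Complex_Main
begin

definition prob_vec :: "nat \<Rightarrow> (nat \<Rightarrow> real) \<Rightarrow> bool" where
  "prob_vec n p \<longleftrightarrow> (\<forall>i<n. 0 \<le> p i) \<and> (\<Sum>i<n. p i) = 1 \<and>
     (\<forall>i j. i \<le> j \<longrightarrow> j < n \<longrightarrow> p j \<le> p i)"

text \<open>Meet in the majorization lattice: the partial sums of the meet are the
  minima of the partial sums.\<close>
definition maj_meet :: "(nat \<Rightarrow> real) \<Rightarrow> (nat \<Rightarrow> real) \<Rightarrow> nat \<Rightarrow> real" where
  "maj_meet p q i =
     min (\<Sum>j<Suc i. p j) (\<Sum>j<Suc i. q j) - min (\<Sum>j<i. p j) (\<Sum>j<i. q j)"

text \<open>Shannon entropy (natural log; 0 ln 0 = 0 since ln 0 = 0 in Isabelle).\<close>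
definition shannon :: "nat \<Rightarrow> (nat \<Rightarrow> real) \<Rightarrow> real" where
  "shannon n p = - (\<Sum>i<n. p i * ln (p i))"

text \<open>Sharma-Mittal entropy, with the limiting cases alpha = 1 and/or beta = 1.
  Powers are taken with powr, so 0 powr a = 0 (zero components contribute nothing,
  also for alpha = 0).\<close>
definition sharma_mittal :: "real \<Rightarrow> real \<Rightarrow> nat \<Rightarrow> (nat \<Rightarrow> real) \<Rightarrow> real" where
  "sharma_mittal \<alpha> \<beta> n p =
     (if \<alpha> \<noteq> 1 \<and> \<beta> \<noteq> 1 then
        (1 / (1 - \<beta>)) * ((\<Sum>i<n. p i powr \<alpha>) powr ((1 - \<beta>) / (1 - \<alpha>)) - 1)
      else if \<alpha> = 1 \<and> \<beta> \<noteq> 1 then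
        (1 / (1 - \<beta>)) * (exp ((1 - \<beta>) * shannon n p) - 1)
      else if \<alpha> \<noteq> 1 \<and> \<beta> = 1 then
        (1 / (1 - \<alpha>)) * ln (\<Sum>i<n. p i powr \<alpha>)
      else shannon n p)"

end

theory Submission imports Defs "HOL-Analysis.Analysis" begin


definition cc :: "(real \<Rightarrow> real) \<Rightarrow> bool" where
  "cc f \<longleftrightarrow> (\<forall>x\<ge>0. \<forall>y\<ge>0. \<forall>u. 0 \<le> u \<and> u \<le> 1 \<longrightarrow>
      (1-u) * f x + u * f y \<le> f ((1-u)*x + u*y))"

lemma cc_lower_chord:
  assumes "cc f" "f 0 = 0" "0 \<le> y" "y \<le> t" "0 < t"
  shows "y / t * f t \<le> f y"
proof -
  have H: "\<And>x y u. 0 \<le> x \<Longrightarrow> 0 \<le> y \<Longrightarrow> 0 \<le> u \<Longrightarrow> u \<le> 1 \<Longrightarrow>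
      (1-u) * f x + u * f y \<le> f ((1-u)*x + u*y)"
    using assms(1) unfolding cc_def by blast
  have "(1 - y/t) * f 0 + (y/t) * f t \<le> f ((1-y/t)*0 + (y/t)*t)"
    using assms by (intro H) auto
  then show ?thesis using assms by simp
qed

lemma cc_upper_chord:
  assumes "cc f" "f 0 = 0" "0 < t" "t \<le> z"
  shows "f z \<le> z / t * f t"
proof -
  have "t / z * f z \<le> f t" using cc_lower_chord[OF assms(1,2), of t z] assms by auto
  then have "z * (t / z * f z) \<le> z * f t" using assms by (intro mult_left_mono) auto
  then have "t * f z \<le> z * f t" using assms by (simp add: field_simps)
  then show ?thesis using assms by (simp add: field_simps)
qed

lemma core:
  fixes \<phi> :: "real \<Rightarrow> real" and x :: "'a \<Rightarrow> real" and r :: "'b \<Rightarrow> real"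
  assumes "finite A" "finite B" "cc \<phi>" "\<phi> 0 = 0"
    "\<forall>a\<in>A. 0 \<le> x a" "\<forall>b\<in>B. 0 \<le> r b"
    "\<forall>t\<ge>0. (\<Sum>a\<in>A. max 0 (x a - t)) \<le> (\<Sum>b\<in>B. max 0 (r b - t))"
    "(\<Sum>a\<in>A. x a) = (\<Sum>b\<in>B. r b) \<or> (\<forall>y\<ge>0. \<phi> y \<le> 0)"
  shows "(\<Sum>b\<in>B. \<phi> (r b)) \<le> (\<Sum>a\<in>A. \<phi> (x a))"
  using assms(3-)
proof (induction "card {b\<in>B. 0 < r b}" arbitrary: \<phi> x r rule: less_induct)
  case less
  show ?case
  proof (cases "{b\<in>B. 0 < r b} = {}")
    case True
    then have r0: "\<forall>b\<in>B. r b = 0" using less.prems by force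
    have "(\<Sum>a\<in>A. max 0 (x a - 0)) \<le> (\<Sum>b\<in>B. max 0 (r b - 0))" using less.prems by blast
    then have "(\<Sum>a\<in>A. x a) \<le> 0" using r0 less.prems by simp
    then have "\<forall>a\<in>A. x a = 0" using sum_nonneg_eq_0_iff[OF assms(1)] less.prems
      by (metis (no_types, lifting) antisym sum_nonneg)
    then show ?thesis using r0 less.prems by simp
  next
    case False
    define P where "P = {b\<in>B. 0 < r b}"
    have finP: "finite P" using assms(2) P_def by simp
    define t where "t = Min (r ` P)"
    have tin: "t \<in> r ` P" unfolding t_def using finP False P_def by (intro Min_in) auto
    have tle: "\<And>b. b \<in> P \<Longrightarrow> t \<le> r b" unfolding t_def using finP by auto
    have tpos: "0 < t" using tin P_def by auto
    have rcase: "\<And>b. b \<in> B \<Longrightarrow> r b = 0 \<or> t \<le> r b"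
      using tle less.prems P_def by force
    define c where "c = \<phi> t / t"
    define \<psi> where "\<psi> = (\<lambda>u. \<phi> (u + t) - c * (u + t))"
    define x' where "x' = (\<lambda>a. max 0 (x a - t))"
    define r' where "r' = (\<lambda>b. max 0 (r b - t))"
    obtain b0 where b0: "b0 \<in> P" "r b0 = t" using tin by auto
    have sub: "{b\<in>B. 0 < r' b} \<subset> P"
    proof
      show "{b\<in>B. 0 < r' b} \<subseteq> P" unfolding r'_def P_def using tpos by auto
      show "{b\<in>B. 0 < r' b} \<noteq> P" using b0 unfolding r'_def by auto
    qed
    have card_less: "card {b\<in>B. 0 < r' b} < card {b\<in>B. 0 < r b}"
      using psubset_card_mono[OF finP sub] P_def by simp
    have cc\<psi>: "cc \<psi>"
      unfolding cc_def
    proof (intro allI impI)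
      fix u v w :: real assume h: "0 \<le> u" "0 \<le> v" "0 \<le> w \<and> w \<le> 1"
      have "(1-w) * \<phi> (u+t) + w * \<phi> (v+t) \<le> \<phi> ((1-w)*(u+t) + w*(v+t))"
        using less.prems(1) h tpos unfolding cc_def by auto
      moreover have "(1-w)*(u+t) + w*(v+t) = ((1-w)*u + w * v) + t" by (simp add: algebra_simps)
      ultimately show "(1-w) * \<psi> u + w * \<psi> v \<le> \<psi> ((1-w)*u + w * v)"
        unfolding \<psi>_def by (simp add: algebra_simps)
    qed
    have \<psi>0: "\<psi> 0 = 0" unfolding \<psi>_def c_def using tpos by simp
    have \<psi>neg: "\<forall>y\<ge>0. \<psi> y \<le> 0"
    proof (intro allI impI)
      fix y :: real assume "0 \<le> y"
      then have "\<phi> (y+t) \<le> (y+t)/t * \<phi> t"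
        using cc_upper_chord[OF less.prems(1,2) tpos, of "y+t"] by simp
      then show "\<psi> y \<le> 0" unfolding \<psi>_def c_def by (simp add: field_simps)
    qed
    have IH: "(\<Sum>b\<in>B. \<psi> (r' b)) \<le> (\<Sum>a\<in>A. \<psi> (x' a))"
    proof (rule less.hyps[OF card_less cc\<psi> \<psi>0])
      show "\<forall>a\<in>A. 0 \<le> x' a" unfolding x'_def by auto
      show "\<forall>b\<in>B. 0 \<le> r' b" unfolding r'_def by auto
      show "\<forall>s\<ge>0. (\<Sum>a\<in>A. max 0 (x' a - s)) \<le> (\<Sum>b\<in>B. max 0 (r' b - s))"
      proof (intro allI impI)
        fix s :: real assume s: "0 \<le> s"
        have "(\<Sum>a\<in>A. max 0 (x a - (t+s))) \<le> (\<Sum>b\<in>B. max 0 (r b - (t+s)))"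
          using less.prems(5) s tpos by auto
        moreover have "\<And>a. max 0 (x' a - s) = max 0 (x a - (t+s))" unfolding x'_def using s by auto
        moreover have "\<And>b. max 0 (r' b - s) = max 0 (r b - (t+s))" unfolding r'_def using s by auto
        ultimately show "(\<Sum>a\<in>A. max 0 (x' a - s)) \<le> (\<Sum>b\<in>B. max 0 (r' b - s))" by simp
      qed
      show "(\<Sum>a\<in>A. x' a) = (\<Sum>b\<in>B. r' b) \<or> (\<forall>y\<ge>0. \<psi> y \<le> 0)" using \<psi>neg by blast
    qed
    have req: "\<And>b. b \<in> B \<Longrightarrow> \<phi> (r b) = \<psi> (r' b) + c * r b"
    proof -
      fix b assume b: "b \<in> B"
      show "\<phi> (r b) = \<psi> (r' b) + c * r b"
      proof (cases "r b = 0")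
        case True then show ?thesis using \<psi>0 less.prems(2) tpos unfolding r'_def by simp
      next
        case False then have "t \<le> r b" using rcase b by auto
        then show ?thesis unfolding r'_def \<psi>_def by simp
      qed
    qed
    have xineq: "\<And>a. a \<in> A \<Longrightarrow> \<psi> (x' a) + c * x a \<le> \<phi> (x a)"
    proof -
      fix a assume a: "a \<in> A"
      show "\<psi> (x' a) + c * x a \<le> \<phi> (x a)"
      proof (cases "t \<le> x a")
        case True then show ?thesis unfolding x'_def \<psi>_def by simp
      next
        case False
        then have "x a / t * \<phi> t \<le> \<phi> (x a)"
          using cc_lower_chord[OF less.prems(1,2), of "x a" t] less.prems(3) a tpos by auto
        then show ?thesis using False \<psi>0 unfolding x'_def c_def by (simp add: mult.commute)
      qed
    qed
    have csum: "c * (\<Sum>b\<in>B. r b) \<le> c * (\<Sum>a\<in>A. x a)"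
    proof (cases "(\<Sum>a\<in>A. x a) = (\<Sum>b\<in>B. r b)")
      case True then show ?thesis by simp
    next
      case False
      then have neg: "\<forall>y\<ge>0. \<phi> y \<le> 0" using less.prems(6) by blast
      have "c \<le> 0" unfolding c_def using neg tpos by (simp add: divide_nonpos_pos)
      moreover have "(\<Sum>a\<in>A. max 0 (x a - 0)) \<le> (\<Sum>b\<in>B. max 0 (r b - 0))" using less.prems by blast
      then have "(\<Sum>a\<in>A. x a) \<le> (\<Sum>b\<in>B. r b)" using less.prems(3,4) by simp
      ultimately show ?thesis by (simp add: mult_left_mono_neg)
    qed
    have "(\<Sum>b\<in>B. \<phi> (r b)) = (\<Sum>b\<in>B. \<psi> (r' b)) + c * (\<Sum>b\<in>B. r b)"
      using req by (simp add: sum.distrib sum_distrib_left)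
    also have "\<dots> \<le> (\<Sum>a\<in>A. \<psi> (x' a)) + c * (\<Sum>a\<in>A. x a)" using IH csum by simp
    also have "\<dots> = (\<Sum>a\<in>A. \<psi> (x' a) + c * x a)" by (simp add: sum.distrib sum_distrib_left)
    also have "\<dots> \<le> (\<Sum>a\<in>A. \<phi> (x a))" using xineq by (intro sum_mono) auto
    finally show ?thesis .
  qed
qed



lemma pv_nonneg: "prob_vec n p \<Longrightarrow> i < n \<Longrightarrow> 0 \<le> p i"
  unfolding prob_vec_def by auto

lemma pv_sum: "prob_vec n p \<Longrightarrow> (\<Sum>i<n. p i) = 1"
  unfolding prob_vec_def by auto

lemma pv_mono: "prob_vec n p \<Longrightarrow> i \<le> j \<Longrightarrow> j < n \<Longrightarrow> p j \<le> p i"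
  unfolding prob_vec_def by auto

lemma pv_le1: assumes "prob_vec n p" "i < n" shows "p i \<le> 1"
proof -
  have "p i \<le> (\<Sum>j<n. p j)"
    using assms by (intro member_le_sum) (auto intro: pv_nonneg)
  then show ?thesis using pv_sum[OF assms(1)] by simp
qed

lemma meet_partial:
  "(\<Sum>i<m. maj_meet p q i) = min (\<Sum>j<m. p j) (\<Sum>j<m. q j)"
proof -
  have "(\<Sum>i<m. maj_meet p q i) =
     (\<Sum>i<m. (\<lambda>k. min (\<Sum>j<k. p j) (\<Sum>j<k. q j)) (Suc i) - (\<lambda>k. min (\<Sum>j<k. p j) (\<Sum>j<k. q j)) i)"
    unfolding maj_meet_def by simp
  also have "\<dots> = min (\<Sum>j<m. p j) (\<Sum>j<m. q j)"
    by (subst sum_lessThan_telescope) simp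
  finally show ?thesis .
qed

lemma meet_nonneg:
  assumes "prob_vec n p" "prob_vec n q" "i < n"
  shows "0 \<le> maj_meet p q i"
proof -
  have "p i \<ge> 0" "q i \<ge> 0" using assms by (auto intro: pv_nonneg)
  then show ?thesis unfolding maj_meet_def by (simp add: min_le_iff_disj)
qed

lemma meet_sum:
  assumes "prob_vec n p" "prob_vec n q"
  shows "(\<Sum>i<n. maj_meet p q i) = 1"
  using meet_partial[of p q n] pv_sum[OF assms(1)] pv_sum[OF assms(2)] by simp

lemma card_diff_le:
  assumes "finite I" "finite M" "card I \<le> card M"
  shows "card (I - M) \<le> card (M - I)"
proof -
  have "card I = card (I \<inter> M) + card (I - M)"
    using assms by (metis card_Int_Diff)
  moreover have "card M = card (M \<inter> I) + card (M - I)"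
    using assms by (metis card_Int_Diff)
  ultimately show ?thesis using assms by (simp add: Int_commute)
qed

lemma top_sum:
  assumes "prob_vec n p" "I \<subseteq> {..<n}" "card I \<le> m" "m \<le> n"
  shows "(\<Sum>i\<in>I. p i) \<le> (\<Sum>i<m. p i)"
proof (cases "m = 0")
  case True
  then have "I = {}" using assms finite_subset[OF assms(2)] by auto
  then show ?thesis using True by simp
next
  case False
  define v where "v = p (m - 1)"
  have finI: "finite I" using assms finite_subset by blast
  have hi: "\<And>i. i \<in> I - {..<m} \<Longrightarrow> p i \<le> v"
    unfolding v_def using assms False by (intro pv_mono) auto
  have lo: "\<And>i. i \<in> {..<m} - I \<Longrightarrow> v \<le> p i"
    unfolding v_def using assms False by (intro pv_mono) auto
  have c: "card (I - {..<m}) \<le> card ({..<m} - I)"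
    using card_diff_le[of I "{..<m}"] finI assms by simp
  have v0: "0 \<le> v" unfolding v_def using assms False by (intro pv_nonneg) auto
  have "(\<Sum>i\<in>I - {..<m}. p i) \<le> (\<Sum>i\<in>I - {..<m}. v)" using hi by (intro sum_mono) auto
  also have "\<dots> = card (I - {..<m}) * v" by simp
  also have "\<dots> \<le> card ({..<m} - I) * v" using c v0 by (intro mult_right_mono) auto
  also have "\<dots> = (\<Sum>i\<in>{..<m} - I. v)" by simp
  also have "\<dots> \<le> (\<Sum>i\<in>{..<m} - I. p i)" using lo by (intro sum_mono) auto
  finally have 1: "(\<Sum>i\<in>I - {..<m}. p i) \<le> (\<Sum>i\<in>{..<m} - I. p i)" .
  have "(\<Sum>i\<in>I. p i) = (\<Sum>i\<in>I \<inter> {..<m}. p i) + (\<Sum>i\<in>I - {..<m}. p i)"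
    using finI by (metis sum.Int_Diff)
  moreover have "(\<Sum>i<m. p i) = (\<Sum>i\<in>{..<m} \<inter> I. p i) + (\<Sum>i\<in>{..<m} - I. p i)"
    by (metis finite_lessThan sum.Int_Diff)
  ultimately show ?thesis using 1 by (simp add: Int_commute)
qed

lemma prod_sum_p:
  assumes "prob_vec n q" "I \<subseteq> {..<n}"
  shows "(\<Sum>ij\<in>I \<times> {..<n}. p (fst ij) * q (snd ij)) = (\<Sum>i\<in>I. p i)"
proof -
  have "(\<Sum>ij\<in>I \<times> {..<n}. p (fst ij) * q (snd ij)) = (\<Sum>i\<in>I. \<Sum>j<n. p i * q j)"
    by (simp add: sum.cartesian_product case_prod_beta')
  also have "\<dots> = (\<Sum>i\<in>I. p i)" by (simp add: sum_distrib_left[symmetric] pv_sum[OF assms(1)])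
  finally show ?thesis .
qed

lemma prod_sum_q:
  assumes "prob_vec n p" "J \<subseteq> {..<n}"
  shows "(\<Sum>ij\<in>{..<n} \<times> J. p (fst ij) * q (snd ij)) = (\<Sum>j\<in>J. q j)"
proof -
  have "(\<Sum>ij\<in>{..<n} \<times> J. p (fst ij) * q (snd ij)) = (\<Sum>i<n. \<Sum>j\<in>J. p i * q j)"
    by (simp add: sum.cartesian_product case_prod_beta')
  also have "\<dots> = (\<Sum>j\<in>J. q j)"
    by (simp add: sum_distrib_left[symmetric] sum_distrib_right[symmetric] pv_sum[OF assms(1)])
  finally show ?thesis .
qed

lemma hinge:
  assumes pp: "prob_vec n p" and pq: "prob_vec n q" and t: "0 \<le> t"
  shows "(\<Sum>ij\<in>{..<n} \<times> {..<n}. max 0 (p (fst ij) * q (snd ij) - t))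
      \<le> (\<Sum>k<n. max 0 (maj_meet p q k - t))"
proof -
  define Sig where "Sig = {..<n} \<times> {..<n}"
  define xf where "xf = (\<lambda>ij. p (fst ij) * q (snd ij))"
  define S where "S = {ij\<in>Sig. t < xf ij}"
  have finSig: "finite Sig" unfolding Sig_def by simp
  have finS: "finite S" unfolding S_def using finSig by simp
  have SSig: "S \<subseteq> Sig" unfolding S_def by auto
  have xf0: "\<And>ij. ij \<in> Sig \<Longrightarrow> 0 \<le> xf ij"
    unfolding xf_def Sig_def using pv_nonneg[OF pp] pv_nonneg[OF pq] by auto
  have L: "(\<Sum>ij\<in>Sig. max 0 (xf ij - t)) = (\<Sum>ij\<in>S. xf ij) - card S * t"
  proof -
    have "(\<Sum>ij\<in>S. xf ij - t) = (\<Sum>ij\<in>Sig. if t < xf ij then xf ij - t else 0)"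
      unfolding S_def using finSig by (rule sum.inter_filter)
    also have "\<dots> = (\<Sum>ij\<in>Sig. max 0 (xf ij - t))" by (intro sum.cong) auto
    finally show ?thesis by (simp add: sum_subtractf)
  qed
  define m where "m = min (card S) n"
  define r where "r = maj_meet p q"
  have r0: "\<And>k. k < n \<Longrightarrow> 0 \<le> r k" unfolding r_def using pp pq by (rule meet_nonneg)
  have "(\<Sum>k<m. r k - t) \<le> (\<Sum>k<m. max 0 (r k - t))" by (intro sum_mono) auto
  also have "\<dots> \<le> (\<Sum>k<n. max 0 (r k - t))" unfolding m_def by (intro sum_mono2) auto
  finally have R: "min (\<Sum>j<m. p j) (\<Sum>j<m. q j) - m * t \<le> (\<Sum>k<n. max 0 (r k - t))"
    unfolding r_def by (simp add: sum_subtractf meet_partial)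
  have key: "(\<Sum>ij\<in>S. xf ij) \<le> min (\<Sum>j<m. p j) (\<Sum>j<m. q j)"
  proof (cases "n \<le> card S")
    case True
    then have mn: "m = n" unfolding m_def by simp
    have "(\<Sum>ij\<in>S. xf ij) \<le> (\<Sum>ij\<in>Sig. xf ij)" using xf0 SSig finSig by (intro sum_mono2) auto
    also have "\<dots> = (\<Sum>i<n. p i)" unfolding Sig_def xf_def by (rule prod_sum_p[OF pq]) auto
    also have "\<dots> = 1" using pv_sum[OF pp] .
    finally show ?thesis using mn pv_sum[OF pp] pv_sum[OF pq] by simp
  next
    case False
    then have mS: "m = card S" and mn: "m \<le> n" unfolding m_def by auto
    have fS: "fst ` S \<subseteq> {..<n}" "snd ` S \<subseteq> {..<n}" using SSig unfolding Sig_def by auto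
    have s1: "S \<subseteq> fst ` S \<times> {..<n}" "S \<subseteq> {..<n} \<times> snd ` S"
      using SSig unfolding Sig_def by (auto intro: rev_image_eqI)
    have "(\<Sum>ij\<in>S. xf ij) \<le> (\<Sum>ij\<in>fst ` S \<times> {..<n}. xf ij)"
    proof (rule sum_mono2)
      show "finite (fst ` S \<times> {..<n})" using finS by simp
      show "S \<subseteq> fst ` S \<times> {..<n}" by (rule s1)
      show "\<And>b. b \<in> fst ` S \<times> {..<n} - S \<Longrightarrow> 0 \<le> xf b"
        using fS xf0 unfolding Sig_def by blast
    qed
    also have "\<dots> = (\<Sum>i\<in>fst ` S. p i)" unfolding xf_def
      using SSig unfolding Sig_def by (intro prod_sum_p[OF pq]) auto
    also have "\<dots> \<le> (\<Sum>i<m. p i)"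
      using SSig mS mn card_image_le[OF finS, of fst] unfolding Sig_def by (intro top_sum[OF pp]) auto
    finally have 1: "(\<Sum>ij\<in>S. xf ij) \<le> (\<Sum>i<m. p i)" .
    have "(\<Sum>ij\<in>S. xf ij) \<le> (\<Sum>ij\<in>{..<n} \<times> snd ` S. xf ij)"
    proof (rule sum_mono2)
      show "finite ({..<n} \<times> snd ` S)" using finS by simp
      show "S \<subseteq> {..<n} \<times> snd ` S" by (rule s1)
      show "\<And>b. b \<in> {..<n} \<times> snd ` S - S \<Longrightarrow> 0 \<le> xf b"
        using fS xf0 unfolding Sig_def by blast
    qed
    also have "\<dots> = (\<Sum>j\<in>snd ` S. q j)" unfolding xf_def
      using SSig unfolding Sig_def by (intro prod_sum_q[OF pp]) auto
    also have "\<dots> \<le> (\<Sum>i<m. q i)"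
      using SSig mS mn card_image_le[OF finS, of snd] unfolding Sig_def by (intro top_sum[OF pq]) auto
    finally have 2: "(\<Sum>ij\<in>S. xf ij) \<le> (\<Sum>i<m. q i)" .
    show ?thesis using 1 2 by simp
  qed
  have "real m * t \<le> card S * t" unfolding m_def using t by (intro mult_right_mono) auto
  then show ?thesis using L R key unfolding Sig_def xf_def r_def by linarith
qed



lemma cc_intro:
  assumes "concave_on {0<..} f" "f 0 = 0"
    "\<And>x u. 0 < x \<Longrightarrow> 0 \<le> u \<Longrightarrow> u \<le> 1 \<Longrightarrow> u * f x \<le> f (u * x)"
  shows "cc f"
  unfolding cc_def
proof (intro allI impI)
  fix x y u :: real assume h: "0 \<le> x" "0 \<le> y" "0 \<le> u \<and> u \<le> 1"
  show "(1-u) * f x + u * f y \<le> f ((1-u)*x + u*y)"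
  proof (cases "x = 0")
    case x: True
    show ?thesis
    proof (cases "y = 0")
      case True then show ?thesis using x assms(2) by simp
    next
      case False then show ?thesis using x h assms(2) assms(3)[of y u] by simp
    qed
  next
    case x: False
    show ?thesis
    proof (cases "y = 0")
      case True then show ?thesis using x h assms(2) assms(3)[of x "1-u"] by simp
    next
      case False
      have "(1-u) * f x + u * f y \<le> f ((1-u) *\<^sub>R x + u *\<^sub>R y)"
        using concave_onD[OF assms(1), of u x y] h x False by auto
      then show ?thesis by simp
    qed
  qed
qed

lemma cc_powr_le1:
  assumes "0 \<le> a" "a \<le> 1"
  shows "cc (\<lambda>y. y powr a)"
proof (rule cc_intro)
  show "concave_on {0<..} (\<lambda>y::real. y powr a)"
  proof (rule f''_le0_imp_concave[where f' = "\<lambda>x. a * x powr (a - 1)"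
        and f'' = "\<lambda>x. a * ((a - 1) * x powr (a - 1 - 1))"])
    show "convex {0::real<..}" by simp
    show "\<And>x. x \<in> {0<..} \<Longrightarrow> DERIV (\<lambda>y. y powr a) x :> a * x powr (a - 1)"
      by (rule has_real_derivative_powr) simp
    show "\<And>x. x \<in> {0<..} \<Longrightarrow> DERIV (\<lambda>x. a * x powr (a - 1)) x :> a * ((a - 1) * x powr (a - 1 - 1))"
      by (rule DERIV_cmult, rule has_real_derivative_powr) simp
    show "\<And>x. x \<in> {0<..} \<Longrightarrow> a * ((a - 1) * x powr (a - 1 - 1)) \<le> 0"
      using assms by (simp add: mult_nonneg_nonpos mult_nonpos_nonneg)
  qed
  show "(0::real) powr a = 0" by simp
  fix x u :: real assume h: "0 < x" "0 \<le> u" "u \<le> 1"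
  have "u \<le> u powr a"
  proof (cases "u = 0")
    case True then show ?thesis by simp
  next
    case False
    then have "u powr 1 \<le> u powr a" using h assms by (intro powr_mono') auto
    then show ?thesis using h by simp
  qed
  then have "u * x powr a \<le> u powr a * x powr a" by (intro mult_right_mono) auto
  then show "u * x powr a \<le> (u * x) powr a" by (simp add: powr_mult)
qed

lemma cc_powr_ge1:
  assumes "1 \<le> a"
  shows "cc (\<lambda>y. - (y powr a))"
proof (rule cc_intro)
  show "concave_on {0<..} (\<lambda>y::real. - (y powr a))"
    using powr_convex[OF assms] unfolding concave_on_def by simp
  show "- ((0::real) powr a) = 0" by simp
  fix x u :: real assume h: "0 < x" "0 \<le> u" "u \<le> 1"
  have "u powr a \<le> u"
  proof (cases "u = 0")
    case True then show ?thesis using assms by simp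
  next
    case False
    then show ?thesis using h assms by (intro powr_le_one_le) auto
  qed
  then have "u powr a * x powr a \<le> u * x powr a" by (intro mult_right_mono) auto
  then show "u * - (x powr a) \<le> - ((u * x) powr a)" by (simp add: powr_mult)
qed

lemma cc_ent: "cc (\<lambda>y. - (y * ln y))"
proof (rule cc_intro)
  show "concave_on {0<..} (\<lambda>y::real. - (y * ln y))"
  proof (rule f''_le0_imp_concave[where f' = "\<lambda>x. - (ln x + 1)" and f'' = "\<lambda>x. - (1 / x)"])
    show "convex {0::real<..}" by simp
    show "DERIV (\<lambda>y. - (y * ln y)) x :> - (ln x + 1)" if "x \<in> {0<..}" for x :: real
    proof -
      have "DERIV ln x :> 1 / x" using that by (simp add: DERIV_ln_divide)
      then have "DERIV (\<lambda>y. y * ln y) x :> 1 * ln x + (1 / x) * x"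
        using DERIV_mult[OF DERIV_ident] by blast
      then have "DERIV (\<lambda>y. - (y * ln y)) x :> - (1 * ln x + (1 / x) * x)" by (rule DERIV_minus)
      then show ?thesis using that by simp
    qed
    show "DERIV (\<lambda>x. - (ln x + 1)) x :> - (1 / x)" if "x \<in> {0<..}" for x :: real
    proof -
      have "DERIV ln x :> 1 / x" using that by (simp add: DERIV_ln_divide)
      then have "DERIV (\<lambda>x. ln x + 1) x :> 1 / x + 0" by (intro DERIV_add) auto
      then have "DERIV (\<lambda>x. - (ln x + 1)) x :> - (1 / x + 0)" by (rule DERIV_minus)
      then show ?thesis by simp
    qed
    show "\<And>x. x \<in> {0<..} \<Longrightarrow> - (1 / x) \<le> (0::real)" by simp
  qed
  show "- (0 * ln (0::real)) = 0" by simp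
  fix x u :: real assume h: "0 < x" "0 \<le> u" "u \<le> 1"
  show "u * - (x * ln x) \<le> - (u * x * ln (u * x))"
  proof (cases "u = 0")
    case True then show ?thesis by simp
  next
    case False
    then have "ln (u * x) = ln u + ln x" using h by (simp add: ln_mult_pos)
    moreover have "ln u \<le> 0" using h False by simp
    moreover have "0 \<le> u * x" using h by simp
    ultimately have "u * x * ln u \<le> 0" by (intro mult_nonneg_nonpos)
    then show ?thesis using \<open>ln (u * x) = ln u + ln x\<close> by (simp add: algebra_simps)
  qed
qed


lemma apply_core:
  assumes pp: "prob_vec n p" and pq: "prob_vec n q" and c: "cc \<phi>" "\<phi> 0 = 0"
  shows "(\<Sum>k<n. \<phi> (maj_meet p q k)) \<le> (\<Sum>ij\<in>{..<n}\<times>{..<n}. \<phi> (p (fst ij) * q (snd ij)))"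
proof (rule core[OF _ _ c])
  show "finite ({..<n}\<times>{..<n})" by simp
  show "finite {..<n}" by simp
  show "\<forall>a\<in>{..<n}\<times>{..<n}. 0 \<le> p (fst a) * q (snd a)"
    using pv_nonneg[OF pp] pv_nonneg[OF pq] by auto
  show "\<forall>b\<in>{..<n}. 0 \<le> maj_meet p q b" using meet_nonneg[OF pp pq] by auto
  show "\<forall>t\<ge>0. (\<Sum>a\<in>{..<n}\<times>{..<n}. max 0 (p (fst a) * q (snd a) - t)) \<le> (\<Sum>b<n. max 0 (maj_meet p q b - t))"
    using hinge[OF pp pq] by auto
  have "(\<Sum>a\<in>{..<n}\<times>{..<n}. p (fst a) * q (snd a)) = (\<Sum>i<n. p i)"
    by (rule prod_sum_p[OF pq]) auto
  then show "(\<Sum>a\<in>{..<n}\<times>{..<n}. p (fst a) * q (snd a)) = (\<Sum>b<n. maj_meet p q b) \<or> (\<forall>y\<ge>0. \<phi> y \<le> 0)"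
    using meet_sum[OF pp pq] pv_sum[OF pp] by simp
qed

lemma prod_powr:
  fixes p q :: "nat \<Rightarrow> real" and a :: real
  shows "(\<Sum>ij\<in>{..<n}\<times>{..<n}. (p (fst ij) * q (snd ij)) powr a)
     = (\<Sum>i<n. p i powr a) * (\<Sum>j<n. q j powr a)"
  unfolding powr_mult sum_product sum.cartesian_product by (simp add: case_prod_beta')

lemma prod_ent:
  assumes pp: "prob_vec n p" and pq: "prob_vec n q"
  shows "(\<Sum>ij\<in>{..<n}\<times>{..<n}. - (p (fst ij) * q (snd ij) * ln (p (fst ij) * q (snd ij))))
     = shannon n p + shannon n q"
proof -
  have pt: "\<And>x y::real. x * y * ln (x * y) = y * (x * ln x) + x * (y * ln y)"
    by (simp add: ln_mult algebra_simps)
  have "(\<Sum>ij\<in>{..<n}\<times>{..<n}. - (p (fst ij) * q (snd ij) * ln (p (fst ij) * q (snd ij))))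
      = - (\<Sum>i<n. \<Sum>j<n. q j * (p i * ln (p i)) + p i * (q j * ln (q j)))"
    unfolding pt sum_negf sum.cartesian_product by (simp add: case_prod_beta')
  also have "\<dots> = - (\<Sum>i<n. (p i * ln (p i)) * (\<Sum>j<n. q j) + p i * (\<Sum>j<n. q j * ln (q j)))"
  proof -
    have "(\<Sum>j<n. q j * (p i * ln (p i)) + p i * (q j * ln (q j)))
        = (p i * ln (p i)) * (\<Sum>j<n. q j) + p i * (\<Sum>j<n. q j * ln (q j))" for i
      by (simp add: sum.distrib sum_distrib_left sum_distrib_right mult.commute)
    then show ?thesis by simp
  qed
  also have "\<dots> = - ((\<Sum>i<n. p i * ln (p i)) * (\<Sum>j<n. q j) + (\<Sum>i<n. p i) * (\<Sum>j<n. q j * ln (q j)))"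
    by (simp add: sum.distrib sum_distrib_right)
  also have "\<dots> = shannon n p + shannon n q"
    unfolding shannon_def using pv_sum[OF pp] pv_sum[OF pq] by simp
  finally show ?thesis .
qed

lemma powr_sum_ge1:
  fixes v :: "nat \<Rightarrow> real" and a :: real
  assumes "\<forall>i<n. 0 \<le> v i \<and> v i \<le> 1" "(\<Sum>i<n. v i) = 1" "0 \<le> a" "a \<le> 1"
  shows "1 \<le> (\<Sum>i<n. v i powr a)"
proof -
  have "v i \<le> v i powr a" if "i < n" for i
  proof (cases "v i = 0")
    case True then show ?thesis by simp
  next
    case False
    then have "v i powr 1 \<le> v i powr a" using assms that by (intro powr_mono') auto
    then show ?thesis using assms that by simp
  qed
  then have "(\<Sum>i<n. v i) \<le> (\<Sum>i<n. v i powr a)" by (intro sum_mono) auto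
  then show ?thesis using assms by simp
qed

lemma powr_sum_le1:
  fixes v :: "nat \<Rightarrow> real" and a :: real
  assumes "\<forall>i<n. 0 \<le> v i \<and> v i \<le> 1" "(\<Sum>i<n. v i) = 1" "1 \<le> a"
  shows "(\<Sum>i<n. v i powr a) \<le> 1"
proof -
  have "v i powr a \<le> v i" if "i < n" for i
  proof (cases "v i = 0")
    case True then show ?thesis using assms by simp
  next
    case False
    then show ?thesis using assms that by (intro powr_le_one_le) auto
  qed
  then have "(\<Sum>i<n. v i powr a) \<le> (\<Sum>i<n. v i)" by (intro sum_mono) auto
  then show ?thesis using assms by simp
qed

lemma powr_sum_pos:
  fixes v :: "nat \<Rightarrow> real" and a :: real
  assumes "\<forall>i<n. 0 \<le> v i" "(\<Sum>i<n. v i) = 1"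
  shows "0 < (\<Sum>i<n. v i powr a)"
proof -
  obtain i where i: "i < n" "v i \<noteq> 0"
  proof (rule ccontr)
    assume "\<not> thesis"
    then have "\<forall>i<n. v i = 0" using that by blast
    then have "(\<Sum>i<n. v i) = 0" by simp
    then show False using assms by simp
  qed
  have "v i powr a \<le> (\<Sum>i<n. v i powr a)" using i by (intro member_le_sum) auto
  moreover have "0 < v i powr a" using i by simp
  ultimately show ?thesis by linarith
qed

lemma ent_nonneg:
  fixes v :: "nat \<Rightarrow> real"
  assumes "\<forall>i<n. 0 \<le> v i \<and> v i \<le> 1"
  shows "0 \<le> shannon n v"
proof -
  have "v i * ln (v i) \<le> 0" if "i < n" for i
  proof (cases "v i = 0")
    case True then show ?thesis by simp
  next
    case False
    then have "0 < v i" "v i \<le> 1" using assms that by (auto simp: less_le)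
    then have "ln (v i) \<le> 0" by simp
    then show ?thesis using assms that by (simp add: mult_nonneg_nonpos)
  qed
  then have "(\<Sum>i<n. v i * ln (v i)) \<le> 0" by (intro sum_nonpos) auto
  then show ?thesis unfolding shannon_def by simp
qed

lemma fin_alg:
  fixes \<beta> X Y Z :: real
  assumes "1 < \<beta>" "X * Y \<le> Z" "0 \<le> X" "X \<le> 1" "0 \<le> Y" "Y \<le> 1"
  shows "1 / (1 - \<beta>) * (Z - 1) \<le> 1 / (1 - \<beta>) * (X - 1) + 1 / (1 - \<beta>) * (Y - 1)"
proof -
  have "0 \<le> (1 - X) * (1 - Y)" using assms by simp
  then have "X + Y - 2 \<le> Z - 1" using assms by (simp add: algebra_simps)
  moreover have "1 / (1 - \<beta>) < 0" using assms by simp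
  ultimately have "1 / (1 - \<beta>) * (Z - 1) \<le> 1 / (1 - \<beta>) * (X + Y - 2)"
    by (intro mult_left_mono_neg) auto
  moreover have "1 / (1 - \<beta>) * (X - 1) + 1 / (1 - \<beta>) * (Y - 1) = 1 / (1 - \<beta>) * ((X - 1) + (Y - 1))"
    by (rule distrib_left[symmetric])
  moreover have "(X - 1) + (Y - 1) = X + Y - 2" by simp
  ultimately show ?thesis by simp
qed


theorem corollary1:
  fixes n :: nat and \<alpha> \<beta> :: real and p q :: "nat \<Rightarrow> real"
  assumes "0 \<le> \<alpha>" and "1 \<le> \<beta>"
    and "prob_vec n p" and "prob_vec n q"
  shows "sharma_mittal \<alpha> \<beta> n (maj_meet p q)
           \<le> sharma_mittal \<alpha> \<beta> n p + sharma_mittal \<alpha> \<beta> n q"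
proof -
  note pp = assms(3) and pq = assms(4)
  define r where "r = maj_meet p q"
  have rb: "\<forall>i<n. 0 \<le> r i \<and> r i \<le> 1"
  proof (intro allI impI conjI)
    fix i assume i: "i < n"
    show "0 \<le> r i" unfolding r_def using meet_nonneg[OF pp pq i] .
    have "r i \<le> (\<Sum>k<n. r k)" using i meet_nonneg[OF pp pq] unfolding r_def
      by (intro member_le_sum) auto
    then show "r i \<le> 1" using meet_sum[OF pp pq] unfolding r_def by simp
  qed
  have rs: "(\<Sum>i<n. r i) = 1" unfolding r_def using meet_sum[OF pp pq] .
  have pb: "\<forall>i<n. 0 \<le> p i \<and> p i \<le> 1" using pv_nonneg[OF pp] pv_le1[OF pp] by auto
  have qb: "\<forall>i<n. 0 \<le> q i \<and> q i \<le> 1" using pv_nonneg[OF pq] pv_le1[OF pq] by auto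
  have ps: "(\<Sum>i<n. p i) = 1" using pv_sum[OF pp] .
  have qs: "(\<Sum>i<n. q i) = 1" using pv_sum[OF pq] .
  define Ap where "Ap = (\<Sum>i<n. p i powr \<alpha>)"
  define Aq where "Aq = (\<Sum>i<n. q i powr \<alpha>)"
  define Ar where "Ar = (\<Sum>i<n. r i powr \<alpha>)"
  have Ap0: "0 < Ap" unfolding Ap_def using pb ps by (intro powr_sum_pos) auto
  have Aq0: "0 < Aq" unfolding Aq_def using qb qs by (intro powr_sum_pos) auto
  have Ar0: "0 < Ar" unfolding Ar_def using rb rs by (intro powr_sum_pos) auto
  have Hle: "shannon n r \<le> shannon n p + shannon n q"
  proof -
    have "(\<Sum>k<n. - (r k * ln (r k))) \<le> (\<Sum>ij\<in>{..<n}\<times>{..<n}. - (p (fst ij) * q (snd ij) * ln (p (fst ij) * q (snd ij))))"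
      unfolding r_def by (rule apply_core[OF pp pq cc_ent]) simp
    then show ?thesis using prod_ent[OF pp pq] unfolding shannon_def by (simp add: sum_negf)
  qed
  have Hp: "0 \<le> shannon n p" using ent_nonneg[OF pb] .
  have Hq: "0 \<le> shannon n q" using ent_nonneg[OF qb] .
  have small: "\<alpha> < 1 \<Longrightarrow> Ar \<le> Ap * Aq \<and> 1 \<le> Ap \<and> 1 \<le> Aq"
  proof -
    assume a1: "\<alpha> < 1"
    have "Ar \<le> Ap * Aq" unfolding Ar_def Ap_def Aq_def r_def prod_powr[symmetric]
      using assms(1) a1 by (intro apply_core[OF pp pq cc_powr_le1]) auto
    moreover have "1 \<le> Ap" unfolding Ap_def using pb ps assms(1) a1 by (intro powr_sum_ge1) auto
    moreover have "1 \<le> Aq" unfolding Aq_def using qb qs assms(1) a1 by (intro powr_sum_ge1) auto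
    ultimately show ?thesis by simp
  qed
  have big: "1 < \<alpha> \<Longrightarrow> Ap * Aq \<le> Ar \<and> Ap \<le> 1 \<and> Aq \<le> 1"
  proof -
    assume a1: "1 < \<alpha>"
    have "(\<Sum>k<n. - (maj_meet p q k powr \<alpha>)) \<le> (\<Sum>ij\<in>{..<n}\<times>{..<n}. - ((p (fst ij) * q (snd ij)) powr \<alpha>))"
      using a1 by (intro apply_core[OF pp pq cc_powr_ge1]) auto
    then have "Ap * Aq \<le> Ar" unfolding Ar_def Ap_def Aq_def r_def sum_negf prod_powr by simp
    moreover have "Ap \<le> 1" unfolding Ap_def using pb ps a1 by (intro powr_sum_le1) auto
    moreover have "Aq \<le> 1" unfolding Aq_def using qb qs a1 by (intro powr_sum_le1) auto
    ultimately show ?thesis by simp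
  qed
  show ?thesis
  proof (cases "\<alpha> = 1")
    case a1: True
    show ?thesis
    proof (cases "\<beta> = 1")
      case True
      then show ?thesis using a1 Hle unfolding sharma_mittal_def r_def by simp
    next
      case b: False
      then have b1: "1 < \<beta>" using assms(2) by simp
      define X where "X = exp ((1 - \<beta>) * shannon n p)"
      define Y where "Y = exp ((1 - \<beta>) * shannon n q)"
      define Z where "Z = exp ((1 - \<beta>) * shannon n r)"
      have "(1 - \<beta>) * (shannon n p + shannon n q) \<le> (1 - \<beta>) * shannon n r"
        using b1 Hle by (intro mult_left_mono_neg) auto
      then have "X * Y \<le> Z" unfolding X_def Y_def Z_def by (simp add: exp_add[symmetric] algebra_simps)
      moreover have "X \<le> 1" unfolding X_def using b1 Hp by (simp add: mult_nonpos_nonneg)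
      moreover have "Y \<le> 1" unfolding Y_def using b1 Hq by (simp add: mult_nonpos_nonneg)
      ultimately have "1 / (1 - \<beta>) * (Z - 1) \<le> 1 / (1 - \<beta>) * (X - 1) + 1 / (1 - \<beta>) * (Y - 1)"
        using b1 unfolding X_def Y_def by (intro fin_alg) auto
      then show ?thesis using a1 b unfolding sharma_mittal_def X_def Y_def Z_def r_def by simp
    qed
  next
    case a: False
    show ?thesis
    proof (cases "\<beta> = 1")
      case b: True
      have "1 / (1 - \<alpha>) * ln Ar \<le> 1 / (1 - \<alpha>) * ln Ap + 1 / (1 - \<alpha>) * ln Aq"
      proof (cases "\<alpha> < 1")
        case True
        then have "ln Ar \<le> ln (Ap * Aq)" using small Ar0 Ap0 Aq0 by simp
        then have "ln Ar \<le> ln Ap + ln Aq" using Ap0 Aq0 by (simp add: ln_mult_pos)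
        then have "ln Ar / (1 - \<alpha>) \<le> (ln Ap + ln Aq) / (1 - \<alpha>)"
          using True by (intro divide_right_mono) auto
        then show ?thesis by (simp add: add_divide_distrib)
      next
        case False
        then have a1: "1 < \<alpha>" using a by simp
        then have "ln (Ap * Aq) \<le> ln Ar" using big Ar0 Ap0 Aq0 by simp
        then have "ln Ap + ln Aq \<le> ln Ar" using Ap0 Aq0 by (simp add: ln_mult_pos)
        then have "ln Ar / (1 - \<alpha>) \<le> (ln Ap + ln Aq) / (1 - \<alpha>)"
          using a1 by (intro divide_right_mono_neg) auto
        then show ?thesis by (simp add: add_divide_distrib)
      qed
      then show ?thesis using a b unfolding sharma_mittal_def Ap_def Aq_def Ar_def r_def by simp
    next
      case b: False
      then have b1: "1 < \<beta>" using assms(2) by simp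
      define t where "t = (1 - \<beta>) / (1 - \<alpha>)"
      define X where "X = Ap powr t"
      define Y where "Y = Aq powr t"
      define Z where "Z = Ar powr t"
      have XYZ: "X * Y \<le> Z \<and> X \<le> 1 \<and> Y \<le> 1"
      proof (cases "\<alpha> < 1")
        case True
        then have t0: "t \<le> 0" unfolding t_def using b1 by (simp add: divide_nonpos_pos)
        have "(Ap * Aq) powr t \<le> Ar powr t" using small True Ar0 t0 by (intro powr_mono2') auto
        then have "X * Y \<le> Z" unfolding X_def Y_def Z_def by (simp add: powr_mult)
        moreover have "X \<le> 1" unfolding X_def using powr_mono[of t 0 Ap] t0 small True Ap0 by simp
        moreover have "Y \<le> 1" unfolding Y_def using powr_mono[of t 0 Aq] t0 small True Aq0 by simp
        ultimately show ?thesis by simp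
      next
        case False
        then have a1: "1 < \<alpha>" using a by simp
        then have t0: "0 \<le> t" unfolding t_def using b1 by (simp add: divide_nonpos_neg)
        have "(Ap * Aq) powr t \<le> Ar powr t" using big a1 Ap0 Aq0 t0 by (intro powr_mono2) auto
        then have "X * Y \<le> Z" unfolding X_def Y_def Z_def by (simp add: powr_mult)
        moreover have "X \<le> 1" unfolding X_def using big a1 Ap0 t0 by (intro powr_le1) auto
        moreover have "Y \<le> 1" unfolding Y_def using big a1 Aq0 t0 by (intro powr_le1) auto
        ultimately show ?thesis by simp
      qed
      have "1 / (1 - \<beta>) * (Z - 1) \<le> 1 / (1 - \<beta>) * (X - 1) + 1 / (1 - \<beta>) * (Y - 1)"
        using XYZ b1 unfolding X_def Y_def by (intro fin_alg) auto
      then show ?thesis using a b unfolding sharma_mittal_def X_def Y_def Z_def t_def Ap_def Aq_def Ar_def r_def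
        by simp
    qed
  qed
qed

end
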